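(* Let $a\in[-1,1)$ and $\psi_a=\mathds{1}_{[a,1]}$ on $[-1,1]$. Write $P_{\mathcal{A}_+}(\psi_a)=\sum_{n=0}^\infty c_nt^n$ with $c_n\ge0$, and let $S(a)=\{n\in\mathbb{N}:c_n>0\}$. Then $S(a)=\{0,1\}$ if and only if $-\frac1{\sqrt5}\le a\le0$. Moreover, for every $a\in[-1/\sqrt5,0]$, \[ P_{\mathcal{A}_+}(\psi_a)=\frac12(1-a)+\frac34(1-a^2)t. \]
   Context: $\mathbb{N}=\{0,1,2,\dots\}$. $\psi_a(t)=0$ for $t\in[-1,a)$ and $\psi_a(t)=1$ for $t\in[a,1]$. $\mathcal{A}_+=\{\sum_{n=0}^\infty a_nt^n : a_n\ge0,\ \text{the series converges in }L^2([-1,1])\}$ (real $L^2$ for Lebesgue measure, convergence of partial sums); it is a closed convex cone, $P_{\mathcal{A}_+}$ denotes the metric projection onto it (the unique nearest point), and every element of $\mathcal{A}_+$ has a unique representation $\sum_n c_nt^n$ with $c_n\ge0$. *)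

theory Defs
  imports "HOL-Analysis.Analysis"
begin

text \<open>Indicator function psi_a of [a,1] (only its values on [-1,1] matter).\<close>
definition psi :: "real \<Rightarrow> real \<Rightarrow> real" where
  "psi a t = (if a \<le> t then 1 else 0)"

definition L2 :: "(real \<Rightarrow> real) set" where
  "L2 = {f. f \<in> borel_measurable lborel \<and> set_integrable lborel {-1..1} (\<lambda>t. (f t)\<^sup>2)}"

definition L2dist2 :: "(real \<Rightarrow> real) \<Rightarrow> (real \<Rightarrow> real) \<Rightarrow> real" where
  "L2dist2 f g = (LINT t:{-1..1}|lborel. (f t - g t)\<^sup>2)"

definition psums :: "(nat \<Rightarrow> real) \<Rightarrow> nat \<Rightarrow> real \<Rightarrow> real" where
  "psums c N t = (\<Sum>n<N. c n * t ^ n)"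

definition series_converges_to :: "(nat \<Rightarrow> real) \<Rightarrow> (real \<Rightarrow> real) \<Rightarrow> bool" where
  "series_converges_to c f \<longleftrightarrow> f \<in> L2 \<and> (\<lambda>N. L2dist2 (psums c N) f) \<longlonglongrightarrow> 0"

definition Aplus :: "(real \<Rightarrow> real) set" where
  "Aplus = {f. \<exists>c. (\<forall>n. 0 \<le> c n) \<and> series_converges_to c f}"

text \<open>p is a nearest point of A to h (metric projection; unique up to a.e. equality).\<close>
definition is_proj :: "(real \<Rightarrow> real) set \<Rightarrow> (real \<Rightarrow> real) \<Rightarrow> (real \<Rightarrow> real) \<Rightarrow> bool" where
  "is_proj A h p \<longleftrightarrow> p \<in> A \<and> (\<forall>g\<in>A. L2dist2 h p \<le> L2dist2 h g)"

end

theory Submission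
  imports Defs
begin

definition MM :: "real measure" where "MM = restrict_space lborel {-1..1}"

lemma sets_ok[simp]: "{-1..1::real} \<inter> space lborel \<in> sets lborel" by simp

lemma space_MM[simp]: "space MM = {-1..1}"
  unfolding MM_def by (simp add: space_restrict_space)

lemma set_int_MM: fixes f :: "real \<Rightarrow> real" shows "set_integrable lborel {-1..1} f \<longleftrightarrow> integrable MM f"
  unfolding set_integrable_def MM_def by (rule integrable_restrict_space[symmetric]) simp

lemma LINT_MM: fixes f :: "real \<Rightarrow> real" shows "(LINT t:{-1..1}|lborel. f t) = integral\<^sup>L MM f"
  unfolding set_lebesgue_integral_def MM_def by (rule integral_restrict_space[symmetric]) simp

lemma AE_MM: "(AE t in MM. P t) \<longleftrightarrow> (AE t in lborel. t \<in> {-1..1} \<longrightarrow> P t)"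
  unfolding MM_def by (rule AE_restrict_space_iff) simp

lemma meas_MM: "f \<in> borel_measurable lborel \<Longrightarrow> f \<in> borel_measurable MM"
  unfolding MM_def by (rule measurable_restrict_space1)

lemma finite_MM: "finite_measure MM"
  unfolding MM_def by (rule finite_measureI) (simp add: emeasure_restrict_space space_restrict_space)

lemma measure_MM: "measure MM {-1..1} = 2"
  unfolding MM_def by (simp add: measure_restrict_space space_restrict_space)

lemma L2_iff: "f \<in> L2 \<longleftrightarrow> f \<in> borel_measurable lborel \<and> integrable MM (\<lambda>t. (f t)\<^sup>2)"
  unfolding L2_def by (simp add: set_int_MM)

lemma L2dist2_MM: "L2dist2 f g = integral\<^sup>L MM (\<lambda>t. (f t - g t)\<^sup>2)"
  unfolding L2dist2_def by (rule LINT_MM)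

lemma bounded_L2:
  assumes "f \<in> borel_measurable lborel" "\<And>t. t \<in> {-1..1} \<Longrightarrow> \<bar>f t\<bar> \<le> B"
  shows "f \<in> L2"
  unfolding L2_iff
proof (intro conjI)
  show "integrable MM (\<lambda>t. (f t)\<^sup>2)"
  proof (rule finite_measure.integrable_const_bound[OF finite_MM, where B="B\<^sup>2"])
    show "AE x in MM. norm ((f x)\<^sup>2) \<le> B\<^sup>2"
      using assms(2) by (auto intro!: AE_I2 simp: abs_le_square_iff[symmetric] power2_abs)
       (metis abs_ge_zero abs_le_square_iff abs_of_nonneg order.trans)
    show "(\<lambda>t. (f t)\<^sup>2) \<in> borel_measurable MM" using meas_MM[OF assms(1)] by measurable
  qed
qed (fact assms)

lemma L2_meas: "f \<in> L2 \<Longrightarrow> f \<in> borel_measurable MM"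
  by (simp add: L2_iff meas_MM)

lemma L2_prod_int:
  assumes "f \<in> L2" "g \<in> L2" shows "integrable MM (\<lambda>t. f t * g t)"
proof (rule Bochner_Integration.integrable_bound)
  show "integrable MM (\<lambda>t. (f t)\<^sup>2 + (g t)\<^sup>2)" using assms by (simp add: L2_iff)
  show "(\<lambda>t. f t * g t) \<in> borel_measurable MM" using L2_meas[OF assms(1)] L2_meas[OF assms(2)] by measurable
  have "\<bar>x * y\<bar> \<le> \<bar>x\<^sup>2 + y\<^sup>2\<bar>" for x y :: real
  proof -
    have "0 \<le> (\<bar>x\<bar> - \<bar>y\<bar>)\<^sup>2" by simp
    then have "2 * (\<bar>x\<bar> * \<bar>y\<bar>) \<le> x * x + y * y" by (simp add: power2_eq_square algebra_simps)
    moreover have "0 \<le> \<bar>x\<bar> * \<bar>y\<bar>" by simp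
    moreover have "\<bar>x * y\<bar> = \<bar>x\<bar> * \<bar>y\<bar>" by (simp add: abs_mult)
    moreover have "\<bar>x\<^sup>2 + y\<^sup>2\<bar> = x * x + y * y" by (simp add: power2_eq_square)
    ultimately show ?thesis by linarith
  qed
  then show "AE x in MM. norm (f x * g x) \<le> norm ((f x)\<^sup>2 + (g x)\<^sup>2)" by simp
qed

lemma L2_const: "(\<lambda>t. c) \<in> L2"
  by (rule bounded_L2[where B="\<bar>c\<bar>"]) auto

lemma L2_int: "f \<in> L2 \<Longrightarrow> integrable MM f"
  using L2_prod_int[of f "\<lambda>t. 1"] L2_const by simp

lemma L2_add: assumes "f \<in> L2" "g \<in> L2" shows "(\<lambda>t. f t + g t) \<in> L2"
proof -
  have "integrable MM (\<lambda>t. (f t)\<^sup>2 + 2 * (f t * g t) + (g t)\<^sup>2)"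
    using assms L2_prod_int[OF assms] by (simp add: L2_iff)
  moreover have "(\<lambda>t. (f t + g t)\<^sup>2) = (\<lambda>t. (f t)\<^sup>2 + 2 * (f t * g t) + (g t)\<^sup>2)"
    by (simp add: power2_eq_square algebra_simps)
  moreover have "(\<lambda>t. f t + g t) \<in> borel_measurable borel" using assms unfolding L2_iff by (auto intro: borel_measurable_add)
  ultimately show ?thesis using assms by (simp add: L2_iff)
qed

lemma L2_cmult: assumes "f \<in> L2" shows "(\<lambda>t. r * f t) \<in> L2"
  using assms unfolding L2_iff by (auto simp: power_mult_distrib intro: borel_measurable_times)

lemma L2_diff: assumes "f \<in> L2" "g \<in> L2" shows "(\<lambda>t. f t - g t) \<in> L2"
  using L2_add[OF assms(1) L2_cmult[OF assms(2), of "-1"]] by simp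

lemma L2_pow: "(\<lambda>t. t ^ n) \<in> L2"
proof (rule bounded_L2[where B=1])
  fix t :: real assume "t \<in> {-1..1}"
  then have "\<bar>t\<bar> \<le> 1" by auto
  then show "\<bar>t ^ n\<bar> \<le> 1" by (simp add: power_abs power_le_one)
qed auto

lemma psi_meas: "psi a \<in> borel_measurable lborel"
proof -
  have "psi a = indicator {a..}" by (auto simp: psi_def indicator_def fun_eq_iff)
  then show ?thesis by (simp add: borel_measurable_indicator_iff)
qed

lemma L2_psi: "psi a \<in> L2"
  by (rule bounded_L2[OF psi_meas, where B=1]) (auto simp: psi_def)

lemma psums_Suc: "psums c (Suc N) = (\<lambda>t. psums c N t + c N * t ^ N)"
  unfolding psums_def by auto

lemma L2_psums: "psums c N \<in> L2"
proof (induction N)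
  case 0 then show ?case using L2_const[of 0] by (simp add: psums_def)
next
  case (Suc N) then show ?case
    unfolding psums_Suc by (intro L2_add L2_cmult L2_pow)
qed

definition ip :: "(real \<Rightarrow> real) \<Rightarrow> (real \<Rightarrow> real) \<Rightarrow> real" where
  "ip u v = integral\<^sup>L MM (\<lambda>t. u t * v t)"

lemma expand:
  assumes f: "f \<in> L2" and g: "g \<in> L2" and q: "q \<in> L2"
  shows "L2dist2 f g = L2dist2 f q + 2 * ip (\<lambda>t. f t - q t) (\<lambda>t. q t - g t) + L2dist2 q g"
proof -
  have fq: "(\<lambda>t. f t - q t) \<in> L2" and qg: "(\<lambda>t. q t - g t) \<in> L2"
    using f g q by (auto intro: L2_diff)
  have i1: "integrable MM (\<lambda>t. (f t - q t)\<^sup>2)" using fq by (simp add: L2_iff)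
  have i2: "integrable MM (\<lambda>t. (q t - g t)\<^sup>2)" using qg by (simp add: L2_iff)
  have i3: "integrable MM (\<lambda>t. (f t - q t) * (q t - g t))" using L2_prod_int[OF fq qg] .
  have "(\<lambda>t. (f t - g t)\<^sup>2) = (\<lambda>t. (f t - q t)\<^sup>2 + 2 * ((f t - q t) * (q t - g t)) + (q t - g t)\<^sup>2)"
    by (simp add: power2_eq_square algebra_simps)
  then have "L2dist2 f g = integral\<^sup>L MM (\<lambda>t. (f t - q t)\<^sup>2 + 2 * ((f t - q t) * (q t - g t)) + (q t - g t)\<^sup>2)"
    by (simp add: L2dist2_MM)
  also have "\<dots> = L2dist2 f q + 2 * ip (\<lambda>t. f t - q t) (\<lambda>t. q t - g t) + L2dist2 q g"
    using i1 i2 i3 by (simp add: L2dist2_MM ip_def)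
  finally show ?thesis .
qed

lemma L2dist2_nonneg: "0 \<le> L2dist2 f g"
  unfolding L2dist2_MM by simp

lemma ip_bound:
  assumes u: "u \<in> borel_measurable lborel" and B: "\<And>t. t \<in> {-1..1} \<Longrightarrow> \<bar>u t\<bar> \<le> B"
    and d: "d \<in> L2" and r: "r > 0"
  shows "\<bar>ip u d\<bar> \<le> B * (integral\<^sup>L MM (\<lambda>t. (d t)\<^sup>2) / (2 * r) + r)"
proof -
  have B0: "0 \<le> B" using B[of 0] by auto
  have id: "integrable MM (\<lambda>t. (d t)\<^sup>2)" using d by (simp add: L2_iff)
  have iud: "integrable MM (\<lambda>t. u t * d t)"
    using L2_prod_int[OF bounded_L2[OF u B] d] .
  have pt: "\<bar>u t * d t\<bar> \<le> B * ((d t)\<^sup>2 / (2 * r) + r / 2)" if "t \<in> {-1..1}" for t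
  proof -
    have "0 \<le> (\<bar>d t\<bar> - r)\<^sup>2" by simp
    then have "2 * r * \<bar>d t\<bar> \<le> (d t)\<^sup>2 + r\<^sup>2" by (simp add: power2_eq_square algebra_simps)
    then have "\<bar>d t\<bar> \<le> (d t)\<^sup>2 / (2 * r) + r / 2" using r
      by (simp add: field_simps power2_eq_square)
    then have "\<bar>u t\<bar> * \<bar>d t\<bar> \<le> B * ((d t)\<^sup>2 / (2 * r) + r / 2)"
      using B[OF that] by (meson abs_ge_zero mult_mono order.trans B0)
    then show ?thesis by (simp add: abs_mult)
  qed
  have "\<bar>ip u d\<bar> \<le> integral\<^sup>L MM (\<lambda>t. \<bar>u t * d t\<bar>)"
    unfolding ip_def by (rule integral_abs_bound)
  also have "\<dots> \<le> integral\<^sup>L MM (\<lambda>t. B * ((d t)\<^sup>2 / (2 * r) + r / 2))"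
  proof (rule integral_mono)
    show "integrable MM (\<lambda>t. B * ((d t)\<^sup>2 / (2 * r) + r / 2))"
      using id by (intro integrable_mult_right Bochner_Integration.integrable_add integrable_divide finite_measure.integrable_const[OF finite_MM])
  qed (use iud pt in auto)
  also have "\<dots> = B * (integral\<^sup>L MM (\<lambda>t. (d t)\<^sup>2) / (2 * r) + r)"
  proof -
    have "integral\<^sup>L MM (\<lambda>t. (d t)\<^sup>2 / (2 * r) + r / 2) = integral\<^sup>L MM (\<lambda>t. (d t)\<^sup>2 / (2 * r)) + integral\<^sup>L MM (\<lambda>t. r / 2)"
      using id by (intro Bochner_Integration.integral_add integrable_divide finite_measure.integrable_const[OF finite_MM])
    also have "\<dots> = integral\<^sup>L MM (\<lambda>t. (d t)\<^sup>2) / (2 * r) + r"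
      by (simp add: measure_MM)
    finally show ?thesis by simp
  qed
  finally show ?thesis .
qed

lemma ip_diff: assumes "u \<in> L2" "f \<in> L2" "g \<in> L2"
  shows "ip u (\<lambda>t. f t - g t) = ip u f - ip u g"
  using L2_prod_int[OF assms(1,2)] L2_prod_int[OF assms(1,3)]
  by (simp add: ip_def right_diff_distrib)

lemma ip_lim:
  assumes u: "u \<in> borel_measurable lborel" and B: "\<And>t. t \<in> {-1..1} \<Longrightarrow> \<bar>u t\<bar> \<le> B"
    and fN: "\<And>N. fN N \<in> L2" and f: "f \<in> L2"
    and lim: "(\<lambda>N. L2dist2 (fN N) f) \<longlonglongrightarrow> 0"
  shows "(\<lambda>N. ip u (fN N)) \<longlonglongrightarrow> ip u f"
proof (rule LIMSEQ_I)
  fix e :: real assume e: "0 < e"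
  have B0: "0 \<le> B" using B[of 0] by auto
  define r where "r = e / (2 * (B + 1))"
  have r: "r > 0" using e B0 by (simp add: r_def)
  have "r * e / (B + 1) > 0" using r e B0 by simp
  with lim obtain no where no: "\<And>n. n \<ge> no \<Longrightarrow> norm (L2dist2 (fN n) f - 0) < r * e / (B + 1)"
    by (metis LIMSEQ_D)
  show "\<exists>no. \<forall>n\<ge>no. norm (ip u (fN n) - ip u f) < e"
  proof (intro exI allI impI)
    fix n assume n: "n \<ge> no"
    have uL: "u \<in> L2" using bounded_L2[OF u B] .
    define D where "D = integral\<^sup>L MM (\<lambda>t. (fN n t - f t)\<^sup>2)"
    have D0: "0 \<le> D" unfolding D_def by simp
    have Dlt: "D < r * e / (B + 1)" using no[OF n] D0 by (simp add: D_def L2dist2_MM)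
    have "\<bar>ip u (fN n) - ip u f\<bar> = \<bar>ip u (\<lambda>t. fN n t - f t)\<bar>"
      using ip_diff[OF uL fN f] by simp
    also have "\<dots> \<le> B * (D / (2 * r) + r)"
      unfolding D_def by (rule ip_bound[OF u B L2_diff[OF fN f] r])
    also have "\<dots> \<le> B * (e / (2 * (B + 1)) + e / (2 * (B + 1)))"
    proof (intro mult_left_mono B0 add_mono)
      have "D / (2 * r) \<le> (r * e / (B + 1)) / (2 * r)"
        using Dlt r by (intro divide_right_mono) auto
      also have "\<dots> = e / (2 * (B + 1))"
      proof -
        have "B + 1 \<noteq> 0" "r \<noteq> 0" using B0 r by auto
        then show ?thesis by (simp add: divide_simps)
      qed
      finally show "D / (2 * r) \<le> e / (2 * (B + 1))" .
    qed (simp add: r_def)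
    also have "\<dots> = B * e / (B + 1)"
    proof -
      have "B + 1 \<noteq> 0" using B0 by simp
      then show ?thesis by (simp add: divide_simps)
    qed
    also have "\<dots> < e" using B0 e by (simp add: divide_simps)
    finally show "norm (ip u (fN n) - ip u f) < e" by simp
  qed
qed

lemma integral_MM_lborel: fixes f :: "real \<Rightarrow> real" shows "integral\<^sup>L MM f = integral\<^sup>L lborel (\<lambda>x. f x * indicator {-1..1} x)"
  unfolding MM_def by (subst integral_restrict_space) (auto simp: mult.commute)

definition mom :: "nat \<Rightarrow> real" where
  "mom k = (if even k then 2 / (real k + 1) else 0)"

lemma integral_pow: "integral\<^sup>L MM (\<lambda>t. t ^ k) = mom k"
proof -
  have "integral\<^sup>L MM (\<lambda>t. t ^ k) = (1 ^ Suc k - (-1) ^ Suc k) / Suc k"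
    unfolding integral_MM_lborel by (rule integral_power) simp
  then show ?thesis by (simp add: mom_def)
qed

lemma integral_psi_pow:
  assumes "-1 \<le> a" "a \<le> 1"
  shows "integral\<^sup>L MM (\<lambda>t. psi a t * t ^ k) = (1 - a ^ Suc k) / Suc k"
proof -
  have "(\<lambda>x. psi a x * x ^ k * indicator {-1..1} x) = (\<lambda>x. x ^ k * indicator {a..1} x)"
    using assms by (auto simp: psi_def indicator_def fun_eq_iff)
  then have "integral\<^sup>L MM (\<lambda>t. psi a t * t ^ k) = integral\<^sup>L lborel (\<lambda>x. x ^ k * indicator {a..1} x)"
    unfolding integral_MM_lborel by simp
  also have "\<dots> = (1 ^ Suc k - a ^ Suc k) / Suc k" using assms by (intro integral_power) simp
  finally show ?thesis by simp
qed

lemma ip_pow_pow: "ip (\<lambda>t. t ^ m) (\<lambda>t. t ^ n) = mom (m + n)"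
proof -
  have "(\<lambda>t::real. t ^ m * t ^ n) = (\<lambda>t. t ^ (m + n))" by (simp add: power_add)
  then show ?thesis unfolding ip_def by (simp add: integral_pow)
qed

lemma ip_comm: "ip u v = ip v u"
  unfolding ip_def by (simp add: mult.commute)

definition dd :: "real \<Rightarrow> real \<Rightarrow> real \<Rightarrow> nat \<Rightarrow> real" where
  "dd a c0 c1 k = (1 - a ^ Suc k) / Suc k - c0 * mom k - c1 * mom (Suc k)"

lemma ip_dd:
  assumes "-1 \<le> a" "a \<le> 1"
  shows "ip (\<lambda>t. psi a t - (c0 + c1 * t)) (\<lambda>t. t ^ k) = dd a c0 c1 k"
proof -
  have i1: "integrable MM (\<lambda>t. psi a t * t ^ k)" by (rule L2_prod_int[OF L2_psi L2_pow])
  have i2: "integrable MM (\<lambda>t. t ^ k)" by (rule L2_int[OF L2_pow])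
  have i3: "integrable MM (\<lambda>t. t ^ Suc k)" by (rule L2_int[OF L2_pow])
  have "(\<lambda>t. (psi a t - (c0 + c1 * t)) * t ^ k) = (\<lambda>t. psi a t * t ^ k - (c0 * t ^ k + c1 * t ^ Suc k))"
    by (auto simp: algebra_simps fun_eq_iff)
  then have "ip (\<lambda>t. psi a t - (c0 + c1 * t)) (\<lambda>t. t ^ k) = integral\<^sup>L MM (\<lambda>t. psi a t * t ^ k - (c0 * t ^ k + c1 * t ^ Suc k))"
    unfolding ip_def by simp
  also have "\<dots> = integral\<^sup>L MM (\<lambda>t. psi a t * t ^ k) - (c0 * integral\<^sup>L MM (\<lambda>t. t ^ k) + c1 * integral\<^sup>L MM (\<lambda>t. t ^ Suc k))"
    using i1 i2 i3 by simp
  also have "\<dots> = dd a c0 c1 k"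
    unfolding dd_def integral_pow integral_psi_pow[OF assms] by simp
  finally show ?thesis .
qed

lemma ip_psums:
  assumes "u \<in> L2"
  shows "ip u (psums c N) = (\<Sum>n<N. c n * ip u (\<lambda>t. t ^ n))"
proof -
  have "ip u (psums c N) = integral\<^sup>L MM (\<lambda>t. \<Sum>n<N. c n * (u t * t ^ n))"
    unfolding ip_def psums_def by (simp add: sum_distrib_left algebra_simps)
  also have "\<dots> = (\<Sum>n<N. integral\<^sup>L MM (\<lambda>t. c n * (u t * t ^ n)))"
    using L2_prod_int[OF assms L2_pow] by (intro Bochner_Integration.integral_sum) auto
  also have "\<dots> = (\<Sum>n<N. c n * ip u (\<lambda>t. t ^ n))"
    unfolding ip_def by simp
  finally show ?thesis .
qed

lemma Aplus_L2: "g \<in> Aplus \<Longrightarrow> g \<in> L2"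
  unfolding Aplus_def series_converges_to_def by auto

lemma L2dist2_self: "L2dist2 f f = 0"
  unfolding L2dist2_MM by simp

lemma psums_stable: assumes "\<And>n. n \<ge> K \<Longrightarrow> c n = 0" "N \<ge> K"
  shows "psums c N = psums c K"
  using assms(2)
proof (induction rule: dec_induct)
  case (step N) then show ?case using assms(1)[of N] by (simp add: psums_Suc)
qed simp

lemma fin_conv: assumes "\<And>n. n \<ge> K \<Longrightarrow> c n = 0"
  shows "series_converges_to c (psums c K)"
  unfolding series_converges_to_def
proof (intro conjI L2_psums)
  have "\<forall>N\<ge>K. L2dist2 (psums c N) (psums c K) = 0"
  proof (intro allI impI)
    fix N assume "N \<ge> K"
    then have "psums c N = psums c K" using psums_stable[of K c N] assms by blast
    then show "L2dist2 (psums c N) (psums c K) = 0" by (simp add: L2dist2_self)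
  qed
  then have "eventually (\<lambda>N. L2dist2 (psums c N) (psums c K) = 0) sequentially"
    unfolding eventually_sequentially by blast
  then show "(\<lambda>N. L2dist2 (psums c N) (psums c K)) \<longlonglongrightarrow> 0" by (rule tendsto_eventually)
qed

lemma fin_Aplus: assumes "\<And>n. 0 \<le> c n" "\<And>n. n \<ge> K \<Longrightarrow> c n = 0"
  shows "psums c K \<in> Aplus"
  unfolding Aplus_def using assms fin_conv[OF assms(2)] by (intro CollectI exI[of _ c]) auto

lemma psums_2: "psums c 2 = (\<lambda>t. c 0 + c 1 * t)"
  unfolding psums_def by (auto simp: numeral_2_eq_2 lessThan_Suc fun_eq_iff)

lemma dd_nonpos:
  assumes a1: "- 1 / sqrt 5 \<le> a" and a2: "a \<le> 0"
  shows "dd a ((1 - a) / 2) (3 / 4 * (1 - a\<^sup>2)) k \<le> 0"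
proof -
  have "(-a)\<^sup>2 \<le> (1 / sqrt 5)\<^sup>2" using a1 a2 by (intro power_mono) auto
  then have asq: "a\<^sup>2 \<le> 1 / 5" by (simp add: power_divide)
  have am1: "-1 \<le> a"
  proof -
    have "1 / sqrt 5 \<le> 1" by simp
    then show ?thesis using a1 by linarith
  qed
  have abs_a: "\<bar>a\<bar> \<le> 1" using am1 a2 by auto
  show ?thesis
  proof (cases "even k")
    case True
    then obtain j where k: "k = 2 * j" by auto
    have "\<bar>a ^ k\<bar> \<le> 1" using abs_a by (simp add: power_abs power_le_one)
    then have "a ^ k \<le> 1" by simp
    then have "a * 1 \<le> a * a ^ k" using a2 by (intro mult_left_mono_neg) auto
    then have "a - a ^ Suc k \<le> 0" by simp
    moreover have "dd a ((1 - a) / 2) (3 / 4 * (1 - a\<^sup>2)) k = (a - a ^ Suc k) / Suc k"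
    proof -
      have m: "mom k = 2 / (real k + 1)" "mom (Suc k) = 0" using True by (auto simp: mom_def)
      have "(1 - a) / 2 * (2 / (real k + 1)) = (1 - a) / (real k + 1)"
        by (simp add: field_simps)
      then have "dd a ((1 - a) / 2) (3 / 4 * (1 - a\<^sup>2)) k = (1 - a ^ Suc k) / (real k + 1) - (1 - a) / (real k + 1)"
        unfolding dd_def m by simp
      also have "\<dots> = (a - a ^ Suc k) / Suc k" by (simp add: diff_divide_distrib[symmetric])
      finally show ?thesis .
    qed
    ultimately show ?thesis by (simp add: divide_nonpos_pos)
  next
    case False
    then obtain j where k: "k = 2 * j + 1" using oddE by blast
    have dd: "dd a ((1 - a) / 2) (3 / 4 * (1 - a\<^sup>2)) k
        = (1 - a ^ (2 * j + 2)) / (2 * j + 2) - 3 / 4 * (1 - a\<^sup>2) * (2 / (2 * j + 3))"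
      using k by (simp add: dd_def mom_def)
    consider "j = 0" | "j = 1" | "j \<ge> 2" by linarith
    then show ?thesis
    proof cases
      case 1 then show ?thesis using dd by (simp add: field_simps power2_eq_square)
    next
      case 2
      have "(1 - a ^ 4) / 4 - 3 / 4 * (1 - a\<^sup>2) * (2 / 5) = (1 - a\<^sup>2) * (5 * a\<^sup>2 - 1) / 20"
        by (simp add: field_simps power2_eq_square power4_eq_xxxx)
      moreover have "0 \<le> 1 - a\<^sup>2" using abs_a by (simp add: abs_square_le_1)
      moreover have "5 * a\<^sup>2 - 1 \<le> 0" using asq by simp
      ultimately have "(1 - a\<^sup>2) * (5 * a\<^sup>2 - 1) \<le> 0" and
        eq: "(1 - a ^ 4) / 4 - 3 / 4 * (1 - a\<^sup>2) * (2 / 5) = (1 - a\<^sup>2) * (5 * a\<^sup>2 - 1) / 20"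
        by (auto intro: mult_nonneg_nonpos)
      then have "(1 - a ^ 4) / 4 - 3 / 4 * (1 - a\<^sup>2) * (2 / 5) \<le> 0" by linarith
      then show ?thesis using dd 2 by simp
    next
      case 3
      have "0 \<le> (a ^ (j + 1))\<^sup>2" by simp
      moreover have "(a ^ (j + 1))\<^sup>2 = a ^ ((j + 1) * 2)" by (rule power_mult[symmetric])
      moreover have "(j + 1) * 2 = 2 * j + 2" by simp
      ultimately have "0 \<le> a ^ (2 * j + 2)" by metis
      then have "(1 - a ^ (2 * j + 2)) / (2 * j + 2) \<le> 1 / (2 * j + 2)"
        by (intro divide_right_mono) auto
      moreover have "4 / 5 * (3 / 2) / (2 * j + 3) \<le> 3 / 4 * (1 - a\<^sup>2) * (2 / (2 * j + 3))"
      proof -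
        have h45: "4 / 5 \<le> 1 - a\<^sup>2" using asq by simp
        have "4 / 5 * (3 / 2) / (2 * j + 3) \<le> (1 - a\<^sup>2) * (3 / 2) / (2 * j + 3)"
          using h45 by (intro divide_right_mono mult_right_mono) auto
        moreover have "(1 - a\<^sup>2) * (3 / 2) / (2 * j + 3) = 3 / 4 * (1 - a\<^sup>2) * (2 / (2 * j + 3))"
        proof -
          have "(2 * real j + 3) \<noteq> 0" by linarith
          then show ?thesis by (simp add: field_simps)
        qed
        ultimately show ?thesis by simp
      qed
      moreover have "1 / real (2 * j + 2) \<le> 4 / 5 * (3 / 2) / real (2 * j + 3)"
        using 3 by (simp add: divide_simps)
      ultimately show ?thesis using dd by linarith
    qed
  qed
qed

lemma L2_lin: "(\<lambda>t. c0 + c1 * t) \<in> L2"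
  using L2_add[OF L2_const L2_cmult[OF L2_pow[of 1], of c1], of c0] by simp

lemma u_meas: "(\<lambda>t. psi a t - (c0 + c1 * t)) \<in> borel_measurable lborel"
  using L2_diff[OF L2_psi L2_lin, of a c0 c1] by (simp add: L2_iff)

lemma u_bound: "t \<in> {-1..1} \<Longrightarrow> \<bar>psi a t - (c0 + c1 * t)\<bar> \<le> 1 + \<bar>c0\<bar> + \<bar>c1\<bar>"
proof -
  assume t: "t \<in> {-1..1}"
  have "\<bar>psi a t\<bar> \<le> 1" by (simp add: psi_def)
  moreover have "\<bar>c1 * t\<bar> \<le> \<bar>c1\<bar>" using t by (auto simp: abs_mult intro: mult_left_le)
  ultimately show ?thesis by linarith
qed

lemma pow_bound: "t \<in> {-1..1} \<Longrightarrow> \<bar>(t::real) ^ m\<bar> \<le> 1"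
  by (auto simp: power_abs intro: power_le_one)

lemma pow_meas: "(\<lambda>t::real. t ^ m) \<in> borel_measurable lborel"
  by simp

lemma ip_lin:
  assumes "u \<in> L2"
  shows "ip u (\<lambda>t. c0 + c1 * t) = c0 * ip u (\<lambda>t. t ^ 0) + c1 * ip u (\<lambda>t. t ^ 1)"
proof -
  have "ip u (psums (\<lambda>n. if n = 0 then c0 else c1) 2) = (\<Sum>n<2. (if n = 0 then c0 else c1) * ip u (\<lambda>t. t ^ n))"
    by (rule ip_psums[OF assms])
  moreover have "psums (\<lambda>n. if n = 0 then c0 else c1) 2 = (\<lambda>t. c0 + c1 * t)"
    by (simp add: psums_2)
  ultimately show ?thesis by (simp add: numeral_2_eq_2)
qed

lemma series_ip:
  assumes c: "series_converges_to c p" and u: "u \<in> borel_measurable lborel"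
    and B: "\<And>t. t \<in> {-1..1} \<Longrightarrow> \<bar>u t\<bar> \<le> B"
  shows "(\<lambda>n. c n * ip u (\<lambda>t. t ^ n)) sums ip u p"
proof -
  have uL: "u \<in> L2" by (rule bounded_L2[OF u B])
  have "(\<lambda>N. ip u (psums c N)) \<longlonglongrightarrow> ip u p"
    using c unfolding series_converges_to_def
    by (intro ip_lim[OF u B L2_psums]) auto
  then show ?thesis unfolding sums_def ip_psums[OF uL] .
qed

lemma dd_01:
  "dd a ((1 - a) / 2) (3 / 4 * (1 - a\<^sup>2)) 0 = 0"
  "dd a ((1 - a) / 2) (3 / 4 * (1 - a\<^sup>2)) 1 = 0"
  by (simp_all add: dd_def mom_def field_simps power2_eq_square)

lemma p0_Aplus:
  assumes "-1 \<le> a" "a \<le> 1"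
  shows "(\<lambda>t. (1 - a) / 2 + 3 / 4 * (1 - a\<^sup>2) * t) \<in> Aplus"
proof -
  define cc where "cc = (\<lambda>n::nat. if n = 0 then (1 - a) / 2 else if n = 1 then 3 / 4 * (1 - a\<^sup>2) else 0)"
  have "a\<^sup>2 \<le> 1" using assms by (simp add: abs_square_le_1)
  then have "\<And>n. 0 \<le> cc n" using assms by (auto simp: cc_def)
  moreover have "\<And>n. n \<ge> 2 \<Longrightarrow> cc n = 0" by (auto simp: cc_def)
  ultimately have "psums cc 2 \<in> Aplus" by (rule fin_Aplus)
  moreover have "psums cc 2 = (\<lambda>t. (1 - a) / 2 + 3 / 4 * (1 - a\<^sup>2) * t)"
    by (simp add: psums_2 cc_def)
  ultimately show ?thesis by simp
qed

lemma opt_ge: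
  assumes a1: "- 1 / sqrt 5 \<le> a" and a2: "a \<le> 0" and g: "g \<in> Aplus"
  shows "0 \<le> ip (\<lambda>t. psi a t - ((1 - a) / 2 + 3 / 4 * (1 - a\<^sup>2) * t))
                 (\<lambda>t. ((1 - a) / 2 + 3 / 4 * (1 - a\<^sup>2) * t) - g t)"
proof -
  have am1: "-1 \<le> a"
  proof -
    have "1 / sqrt 5 \<le> 1" by simp
    then show ?thesis using a1 by linarith
  qed
  let ?c0 = "(1 - a) / 2" and ?c1 = "3 / 4 * (1 - a\<^sup>2)"
  let ?u = "\<lambda>t. psi a t - (?c0 + ?c1 * t)"
  have uL: "?u \<in> L2" by (rule L2_diff[OF L2_psi L2_lin])
  have gL: "g \<in> L2" by (rule Aplus_L2[OF g])
  have ipk: "ip ?u (\<lambda>t. t ^ k) = dd a ?c0 ?c1 k" for k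
    using am1 a2 by (intro ip_dd) auto
  have "ip ?u (\<lambda>t. ?c0 + ?c1 * t) = ?c0 * ip ?u (\<lambda>t. t ^ 0) + ?c1 * ip ?u (\<lambda>t. t ^ 1)"
    by (rule ip_lin[OF uL])
  also have "\<dots> = 0" using ipk[of 0] ipk[of 1] dd_01[of a] by simp
  finally have "ip ?u (\<lambda>t. ?c0 + ?c1 * t) = 0" .
  moreover have "ip ?u g \<le> 0"
  proof -
    from g obtain c where c0: "\<And>n. 0 \<le> c n" and cg: "series_converges_to c g"
      unfolding Aplus_def by auto
    have sm: "(\<lambda>n. c n * ip ?u (\<lambda>t. t ^ n)) sums ip ?u g"
      by (rule series_ip[OF cg u_meas u_bound])
    have le: "c n * ip ?u (\<lambda>t. t ^ n) \<le> 0" for n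
    proof -
      have "dd a ?c0 ?c1 n \<le> 0" by (rule dd_nonpos[OF a1 a2])
      then show ?thesis unfolding ipk using c0[of n] by (rule mult_nonneg_nonpos[rotated])
    qed
    show ?thesis using sums_le[of _ "\<lambda>n. 0", OF le sm sums_zero] .
  qed
  ultimately show ?thesis
    unfolding ip_diff[OF uL L2_lin gL] by simp
qed

lemma proj_p0:
  assumes a1: "- 1 / sqrt 5 \<le> a" and a2: "a \<le> 0"
  shows "is_proj Aplus (psi a) (\<lambda>t. (1 - a) / 2 + 3 / 4 * (1 - a\<^sup>2) * t)"
  unfolding is_proj_def
proof (intro conjI ballI)
  have am1: "-1 \<le> a"
  proof -
    have "1 / sqrt 5 \<le> 1" by simp
    then show ?thesis using a1 by linarith
  qed
  show "(\<lambda>t. (1 - a) / 2 + 3 / 4 * (1 - a\<^sup>2) * t) \<in> Aplus" using am1 a2 by (intro p0_Aplus) auto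
  fix g assume g: "g \<in> Aplus"
  let ?p0 = "\<lambda>t. (1 - a) / 2 + 3 / 4 * (1 - a\<^sup>2) * t"
  have "L2dist2 (psi a) g = L2dist2 (psi a) ?p0 + 2 * ip (\<lambda>t. psi a t - ?p0 t) (\<lambda>t. ?p0 t - g t) + L2dist2 ?p0 g"
    by (rule expand[OF L2_psi Aplus_L2[OF g] L2_lin])
  then show "L2dist2 (psi a) ?p0 \<le> L2dist2 (psi a) g"
    using opt_ge[OF a1 a2 g] L2dist2_nonneg[of ?p0 g] by linarith
qed

lemma L2dist2_zero_AE:
  assumes "f \<in> L2" "g \<in> L2" "L2dist2 f g \<le> 0"
  shows "AE t in MM. f t = g t"
proof -
  have i: "integrable MM (\<lambda>t. (f t - g t)\<^sup>2)" using L2_diff[OF assms(1,2)] by (simp add: L2_iff)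
  have "integral\<^sup>L MM (\<lambda>t. (f t - g t)\<^sup>2) = 0"
    using assms(3) L2dist2_nonneg[of f g] unfolding L2dist2_MM by linarith
  then have "AE t in MM. (f t - g t)\<^sup>2 = 0"
    using integral_nonneg_eq_0_iff_AE[OF i] by simp
  then show ?thesis by eventually_elim simp
qed

lemma proj_unique:
  assumes a1: "- 1 / sqrt 5 \<le> a" and a2: "a \<le> 0" and p: "is_proj Aplus (psi a) p"
  shows "AE t in MM. p t = (1 - a) / 2 + 3 / 4 * (1 - a\<^sup>2) * t"
proof -
  let ?p0 = "\<lambda>t. (1 - a) / 2 + 3 / 4 * (1 - a\<^sup>2) * t"
  have pA: "p \<in> Aplus" and le: "L2dist2 (psi a) p \<le> L2dist2 (psi a) ?p0"
    using p proj_p0[OF a1 a2] unfolding is_proj_def by auto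
  have "L2dist2 (psi a) p = L2dist2 (psi a) ?p0 + 2 * ip (\<lambda>t. psi a t - ?p0 t) (\<lambda>t. ?p0 t - p t) + L2dist2 ?p0 p"
    by (rule expand[OF L2_psi Aplus_L2[OF pA] L2_lin])
  then have "L2dist2 ?p0 p \<le> 0" using le opt_ge[OF a1 a2 pA] by simp
  from L2dist2_zero_AE[OF L2_lin Aplus_L2[OF pA] this] show ?thesis
    by eventually_elim simp
qed

lemma kappa:
  defines "K \<equiv> \<lambda>n. mom n - 3 * mom (2 + n) + 3 * mom (1 + n) - 5 * mom (3 + n)"
  shows "K n \<le> 0" "n \<ge> 2 \<Longrightarrow> K n < 0"
proof -
  have "K n \<le> 0 \<and> (n \<ge> 2 \<longrightarrow> K n < 0)"
  proof (cases "even n")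
    case True
    then have K: "K n = 2 / (real n + 1) - 6 / (real n + 3)"
      by (simp add: K_def mom_def)
    have "2 / (real n + 1) - 6 / (real n + 3) = (- 4 * real n) / ((real n + 1) * (real n + 3))"
      by (simp add: field_simps)
    moreover have "0 < (real n + 1) * (real n + 3)" by simp
    moreover have "- 4 * real n \<le> 0" by simp
    moreover have "n \<ge> 2 \<Longrightarrow> - 4 * real n < 0" by simp
    ultimately show ?thesis unfolding K by (auto intro: divide_nonpos_pos divide_neg_pos)
  next
    case False
    then have K: "K n = 6 / (real n + 2) - 10 / (real n + 4)"
      by (simp add: K_def mom_def add.commute)
    have "6 / (real n + 2) - 10 / (real n + 4) = (4 - 4 * real n) / ((real n + 2) * (real n + 4))"
      by (simp add: field_simps)
    moreover have "0 < (real n + 2) * (real n + 4)" by simp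
    moreover have "n \<ge> 1" using False by (cases n) auto
    then have "4 - 4 * real n \<le> 0" by simp
    moreover have "n \<ge> 2 \<Longrightarrow> 4 - 4 * real n < 0" by simp
    ultimately show ?thesis unfolding K by (auto intro: divide_nonpos_pos divide_neg_pos)
  qed
  then show "K n \<le> 0" "n \<ge> 2 \<Longrightarrow> K n < 0" by auto
qed

lemma ip_cong_AE:
  assumes "u \<in> L2" "p \<in> L2" "q \<in> L2" "AE t in MM. p t = q t"
  shows "ip u p = ip u q"
  unfolding ip_def
proof (rule integral_cong_AE)
  show "(\<lambda>t. u t * p t) \<in> borel_measurable MM" using L2_meas[OF assms(1)] L2_meas[OF assms(2)] by measurable
  show "(\<lambda>t. u t * q t) \<in> borel_measurable MM" using L2_meas[OF assms(1)] L2_meas[OF assms(3)] by measurable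
  show "AE t in MM. u t * p t = u t * q t" using assms(4) by eventually_elim simp
qed

lemma coeffs_p0:
  assumes a1: "- 1 / sqrt 5 \<le> a" and a2: "a \<le> 0"
    and c0: "\<And>n. 0 \<le> c n" and cp: "series_converges_to c p" and pp: "is_proj Aplus (psi a) p"
  shows "{n. c n > 0} = {0, 1}"
proof -
  let ?al = "(1 - a) / 2" and ?be = "3 / 4 * (1 - a\<^sup>2)"
  have am1: "-1 < a"
  proof -
    have "1 / sqrt 5 < 1" by simp
    then show ?thesis using a1 by linarith
  qed
  have pL: "p \<in> L2" using cp unfolding series_converges_to_def by simp
  have AE: "AE t in MM. p t = ?al + ?be * t" by (rule proj_unique[OF a1 a2 pp])
  have S: "(\<lambda>n. c n * mom (m + n)) sums (?al * mom m + ?be * mom (Suc m))" for m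
  proof -
    have "(\<lambda>n. c n * ip (\<lambda>t. t ^ m) (\<lambda>t. t ^ n)) sums ip (\<lambda>t. t ^ m) p"
      by (rule series_ip[OF cp pow_meas pow_bound])
    moreover have "ip (\<lambda>t. t ^ m) p = ip (\<lambda>t. t ^ m) (\<lambda>t. ?al + ?be * t)"
      by (rule ip_cong_AE[OF L2_pow pL L2_lin AE])
    moreover have "\<dots> = ?al * mom m + ?be * mom (Suc m)"
      unfolding ip_lin[OF L2_pow] ip_pow_pow by simp
    ultimately show ?thesis unfolding ip_pow_pow by simp
  qed
  define K where "K = (\<lambda>n. mom n - 3 * mom (2 + n) + 3 * mom (1 + n) - 5 * mom (3 + n))"
  have W: "(\<lambda>n. c n * mom (0 + n) - 3 * (c n * mom (2 + n)) + 3 * (c n * mom (1 + n)) - 5 * (c n * mom (3 + n)))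
      sums ((?al * mom 0 + ?be * mom (Suc 0)) - 3 * (?al * mom 2 + ?be * mom (Suc 2))
            + 3 * (?al * mom 1 + ?be * mom (Suc 1)) - 5 * (?al * mom 3 + ?be * mom (Suc 3)))"
    by (intro sums_diff sums_add sums_mult S)
  moreover have "(?al * mom 0 + ?be * mom (Suc 0)) - 3 * (?al * mom 2 + ?be * mom (Suc 2))
            + 3 * (?al * mom 1 + ?be * mom (Suc 1)) - 5 * (?al * mom 3 + ?be * mom (Suc 3)) = 0"
    by (simp add: mom_def) (simp add: field_simps)
  moreover have "(\<lambda>n. c n * mom (0 + n) - 3 * (c n * mom (2 + n)) + 3 * (c n * mom (1 + n)) - 5 * (c n * mom (3 + n)))
      = (\<lambda>n. c n * K n)"
    by (auto simp: K_def algebra_simps fun_eq_iff)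
  ultimately have W': "(\<lambda>n. c n * K n) sums 0" by simp
  have sm: "(\<lambda>n. - (c n * K n)) sums 0" using sums_minus[OF W'] by simp
  have nn: "\<And>n. 0 \<le> - (c n * K n)"
  proof -
    fix n
    have "K n \<le> 0" unfolding K_def by (rule kappa(1))
    then have "c n * K n \<le> 0" using c0[of n] by (rule mult_nonneg_nonpos[rotated])
    then show "0 \<le> - (c n * K n)" by simp
  qed
  have "suminf (\<lambda>n. - (c n * K n)) = 0" using sums_unique[OF sm] by simp
  then have "\<forall>n. - (c n * K n) = 0"
    using suminf_eq_zero_iff[OF sums_summable[OF sm] nn] by simp
  then have cz: "c n = 0" if "n \<ge> 2" for n
    using kappa(2)[OF that] unfolding K_def by auto
  have fin: "(\<lambda>n. c n * mom (m + n)) sums (\<Sum>n\<in>{..<2}. c n * mom (m + n))" for m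
    by (rule sums_finite) (auto simp: cz)
  have "c 0 * 2 = ?al * 2"
    using sums_unique2[OF S[of 0] fin[of 0]] by (simp add: mom_def numeral_2_eq_2)
  then have c0v: "c 0 = ?al" by simp
  have "c 1 * (2 / 3) = ?be * (2 / 3)"
    using sums_unique2[OF S[of 1] fin[of 1]] by (simp add: mom_def numeral_2_eq_2 numeral_3_eq_3)
  then have c1v: "c 1 = ?be" by simp
  have "a\<^sup>2 < 1" using am1 a2 by (simp add: abs_square_less_1)
  then have pos: "c 0 > 0" "c 1 > 0" using c0v c1v a2 by auto
  show ?thesis
  proof (intro set_eqI iffI)
    fix n assume "n \<in> {n. c n > 0}"
    then show "n \<in> {0, 1}" using cz[of n] by (cases "n \<ge> 2") auto
  next
    fix n assume "n \<in> {0::nat, 1}"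
    then show "n \<in> {n. c n > 0}" using pos by auto
  qed
qed

lemma ip_cmult: "ip u (\<lambda>t. r * v t) = r * ip u v"
  unfolding ip_def by (simp add: mult.left_commute)

lemma perturb:
  assumes am1: "-1 \<le> a" and a1: "a \<le> 1" and c0: "\<And>n. 0 \<le> c n" and cz: "\<And>n. n \<ge> 2 \<Longrightarrow> c n = 0"
    and cp: "series_converges_to c p" and pp: "is_proj Aplus (psi a) p"
    and s: "0 \<le> c k + s"
  shows "2 * s * dd a (c 0) (c 1) k \<le> s\<^sup>2 * mom (2 * k)"
proof -
  define q where "q = (\<lambda>t. c 0 + c 1 * t)"
  have qL: "q \<in> L2" unfolding q_def by (rule L2_lin)
  have pL: "p \<in> L2" using cp unfolding series_converges_to_def by simp
  have stab: "psums c N = q" if "N \<ge> 2" for N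
  proof -
    have "psums c N = psums c 2" using psums_stable[of 2 c N] cz that by blast
    then show ?thesis by (simp add: psums_2 q_def)
  qed
  have lim0: "(\<lambda>N. L2dist2 (psums c N) p) \<longlonglongrightarrow> 0" using cp unfolding series_converges_to_def by simp
  have "eventually (\<lambda>N. L2dist2 (psums c N) p = L2dist2 q p) sequentially"
    unfolding eventually_sequentially using stab by auto
  then have "(\<lambda>N. L2dist2 (psums c N) p) \<longlonglongrightarrow> L2dist2 q p" by (rule tendsto_eventually)
  then have "L2dist2 q p = 0" using lim0 by (rule LIMSEQ_unique)
  then have AEqp: "AE t in MM. q t = p t" using L2dist2_zero_AE[OF qL pL] by simp
  have hp: "L2dist2 (psi a) p = L2dist2 (psi a) q"
    unfolding L2dist2_MM
  proof (rule integral_cong_AE)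
    show "(\<lambda>t. (psi a t - p t)\<^sup>2) \<in> borel_measurable MM"
      using L2_meas[OF L2_diff[OF L2_psi pL]] by measurable
    show "(\<lambda>t. (psi a t - q t)\<^sup>2) \<in> borel_measurable MM"
      using L2_meas[OF L2_diff[OF L2_psi qL]] by measurable
    show "AE t in MM. (psi a t - p t)\<^sup>2 = (psi a t - q t)\<^sup>2" using AEqp by eventually_elim simp
  qed
  define c' where "c' = (\<lambda>n. c n + (if n = k then s else 0))"
  define K where "K = k + 2"
  have c'0: "0 \<le> c' n" for n using c0[of n] s by (auto simp: c'_def)
  have c'z: "c' n = 0" if "n \<ge> K" for n using that cz[of n] by (auto simp: c'_def K_def)
  have gA: "psums c' K \<in> Aplus" by (rule fin_Aplus[OF c'0 c'z])
  have geq: "psums c' K = (\<lambda>t. q t + s * t ^ k)"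
  proof
    fix t :: real
    have "psums c' K t = (\<Sum>n<K. c n * t ^ n) + (\<Sum>n<K. if n = k then s * t ^ k else 0)"
    proof -
      have "\<And>n. c' n * t ^ n = c n * t ^ n + (if n = k then s * t ^ k else 0)"
        by (simp add: c'_def distrib_right)
      then have "psums c' K t = (\<Sum>n<K. c n * t ^ n + (if n = k then s * t ^ k else 0))"
        unfolding psums_def by simp
      also have "\<dots> = (\<Sum>n<K. c n * t ^ n) + (\<Sum>n<K. if n = k then s * t ^ k else 0)"
        by (rule sum.distrib)
      finally show ?thesis .
    qed
    also have "(\<Sum>n<K. if n = k then s * t ^ k else 0) = s * t ^ k"
      by (simp add: K_def)
    also have "(\<Sum>n<K. c n * t ^ n) = q t"
      using stab[of K] unfolding psums_def K_def by (simp add: fun_eq_iff)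
    finally show "psums c' K t = q t + s * t ^ k" .
  qed
  have gL: "(\<lambda>t. q t + s * t ^ k) \<in> L2" using Aplus_L2[OF gA] geq by simp
  have le: "L2dist2 (psi a) p \<le> L2dist2 (psi a) (\<lambda>t. q t + s * t ^ k)"
    using pp gA geq unfolding is_proj_def by auto
  have ex: "L2dist2 (psi a) (\<lambda>t. q t + s * t ^ k) = L2dist2 (psi a) q
      + 2 * ip (\<lambda>t. psi a t - q t) (\<lambda>t. q t - (q t + s * t ^ k)) + L2dist2 q (\<lambda>t. q t + s * t ^ k)"
    by (rule expand[OF L2_psi gL qL])
  have feq: "(\<lambda>t. q t - (q t + s * t ^ k)) = (\<lambda>t. (- s) * t ^ k)" by auto
  have "ip (\<lambda>t. psi a t - q t) (\<lambda>t. q t - (q t + s * t ^ k)) = ip (\<lambda>t. psi a t - q t) (\<lambda>t. (- s) * t ^ k)"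
    unfolding feq ..
  also have "\<dots> = (- s) * ip (\<lambda>t. psi a t - q t) (\<lambda>t. t ^ k)" by (rule ip_cmult)
  also have "ip (\<lambda>t. psi a t - q t) (\<lambda>t. t ^ k) = dd a (c 0) (c 1) k"
    unfolding q_def by (rule ip_dd[OF am1 a1])
  finally have e1: "ip (\<lambda>t. psi a t - q t) (\<lambda>t. q t - (q t + s * t ^ k)) = - s * dd a (c 0) (c 1) k" .
  have "(\<lambda>t. (q t - (q t + s * t ^ k))\<^sup>2) = (\<lambda>t. s\<^sup>2 * t ^ (2 * k))"
    by (auto simp: power_mult_distrib power_even_eq)
  then have e2: "L2dist2 q (\<lambda>t. q t + s * t ^ k) = s\<^sup>2 * mom (2 * k)"
    unfolding L2dist2_MM by (simp add: integral_pow)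
  show ?thesis using le ex e1 e2 hp by simp
qed

lemma mom_pos: "0 < mom (2 * k)"
  by (simp add: mom_def)

lemma only_if:
  assumes am1: "-1 \<le> a" and a1: "a < 1" and c0: "\<And>n. 0 \<le> c n"
    and cp: "series_converges_to c p" and pp: "is_proj Aplus (psi a) p"
    and S: "{n. c n > 0} = {0, 1}"
  shows "- 1 / sqrt 5 \<le> a \<and> a \<le> 0"
proof -
  have cz: "c n = 0" if "n \<ge> 2" for n
  proof -
    have "n \<notin> {n. c n > 0}" using S that by auto
    then show ?thesis using c0[of n] by auto
  qed
  have pos0: "c 0 > 0" and pos1: "c 1 > 0" using S by auto
  have P: "2 * s * dd a (c 0) (c 1) k \<le> s\<^sup>2 * mom (2 * k)" if "0 \<le> c k + s" for k s
    using perturb[OF am1 _ c0 cz cp pp that] a1 by simp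
  have nonpos: "dd a (c 0) (c 1) k \<le> 0" for k
  proof (rule ccontr)
    assume "\<not> ?thesis"
    then have d: "dd a (c 0) (c 1) k > 0" by simp
    define m where "m = mom (2 * k)"
    have m: "m > 0" unfolding m_def by (rule mom_pos)
    define s where "s = dd a (c 0) (c 1) k / m"
    have sp: "s > 0" using d m by (simp add: s_def)
    have sm: "s * m = dd a (c 0) (c 1) k" using m by (simp add: s_def)
    have "2 * s * dd a (c 0) (c 1) k \<le> s\<^sup>2 * m" unfolding m_def using P c0[of k] sp by simp
    then have "s * (2 * dd a (c 0) (c 1) k - s * m) \<le> 0" by (simp add: power2_eq_square algebra_simps)
    then have "2 * dd a (c 0) (c 1) k - s * m \<le> 0" using sp by (simp add: mult_le_0_iff)
    then show False using sm d by simp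
  qed
  have nonneg: "dd a (c 0) (c 1) k \<ge> 0" if ck: "c k > 0" for k
  proof (rule ccontr)
    assume "\<not> ?thesis"
    then have d: "dd a (c 0) (c 1) k < 0" by simp
    define m where "m = mom (2 * k)"
    have m: "m > 0" unfolding m_def by (rule mom_pos)
    define s where "s = max (dd a (c 0) (c 1) k / m) (- c k)"
    have "dd a (c 0) (c 1) k / m < 0" using d m by (simp add: divide_neg_pos)
    then have sn: "s < 0" using ck by (simp add: s_def)
    have "dd a (c 0) (c 1) k / m \<le> s" by (simp add: s_def)
    then have sm: "dd a (c 0) (c 1) k \<le> s * m" using m by (simp add: pos_divide_le_eq)
    have "0 \<le> c k + s" by (simp add: s_def)
    then have "2 * s * dd a (c 0) (c 1) k \<le> s\<^sup>2 * m" unfolding m_def by (rule P)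
    then have "s * (2 * dd a (c 0) (c 1) k - s * m) \<le> 0" by (simp add: power2_eq_square algebra_simps)
    then have "0 \<le> 2 * dd a (c 0) (c 1) k - s * m" using sn by (simp add: mult_le_0_iff)
    then show False using sm d by simp
  qed
  have d0: "dd a (c 0) (c 1) 0 = 0" using nonpos[of 0] nonneg[OF pos0] by simp
  have d1: "dd a (c 0) (c 1) 1 = 0" using nonpos[of 1] nonneg[OF pos1] by simp
  have "dd a (c 0) (c 1) 0 = 1 - a - 2 * c 0" by (simp add: dd_def mom_def)
  then have c0v: "c 0 = (1 - a) / 2" using d0 by simp
  have "dd a (c 0) (c 1) 1 = (1 - a\<^sup>2) / 2 - c 1 * (2 / 3)" by (simp add: dd_def mom_def power2_eq_square)
  then have c1v: "c 1 = 3 / 4 * (1 - a\<^sup>2)" using d1 by simp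
  have "dd a (c 0) (c 1) 2 = (1 - a ^ 3) / 3 - c 0 * (2 / 3)" by (simp add: dd_def mom_def)
  then have "(1 - a ^ 3) / 3 - (1 - a) / 2 * (2 / 3) \<le> 0" using nonpos[of 2] c0v by simp
  then have a3: "a \<le> a ^ 3" by simp
  have aneg: "a \<le> 0"
  proof (rule ccontr)
    assume "\<not> a \<le> 0"
    then have ap: "0 < a" by simp
    have "a\<^sup>2 < 1" using ap a1 by (simp add: abs_square_less_1)
    then have "a * a\<^sup>2 < a * 1" using ap by (intro mult_strict_left_mono)
    then have "a ^ 3 < a" by (simp add: power2_eq_square power3_eq_cube)
    then show False using a3 by simp
  qed
  have "dd a (c 0) (c 1) 3 = (1 - a ^ 4) / 4 - c 1 * (2 / 5)" by (simp add: dd_def mom_def)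
  then have d3: "(1 - a ^ 4) / 4 - 3 / 4 * (1 - a\<^sup>2) * (2 / 5) \<le> 0" using nonpos[of 3] c1v by simp
  have "(1 - a ^ 4) / 4 - 3 / 4 * (1 - a\<^sup>2) * (2 / 5) = (1 - a\<^sup>2) * (5 * a\<^sup>2 - 1) / 20"
    by (simp add: field_simps power2_eq_square power4_eq_xxxx)
  with d3 have "(1 - a\<^sup>2) * (5 * a\<^sup>2 - 1) / 20 \<le> 0" by linarith
  then have "(1 - a\<^sup>2) * (5 * a\<^sup>2 - 1) \<le> 0" by simp
  moreover have "0 < 1 - a\<^sup>2" using pos1 c1v by simp
  ultimately have "5 * a\<^sup>2 - 1 \<le> 0" by (simp add: mult_le_0_iff)
  then have "a\<^sup>2 \<le> 1 / 5" by simp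
  then have "sqrt (a\<^sup>2) \<le> sqrt (1 / 5)" by (rule real_sqrt_le_mono)
  then have "\<bar>a\<bar> \<le> 1 / sqrt 5" by (simp add: real_sqrt_divide)
  then show ?thesis using aneg by simp
qed

theorem proposition1p10:
  fixes a :: real
  assumes "-1 \<le> a" and "a < 1"
  shows "(\<forall>c p. (\<forall>n. 0 \<le> c n) \<and> series_converges_to c p \<and> is_proj Aplus (psi a) p \<longrightarrow>
            ({n. c n > 0} = {0, 1} \<longleftrightarrow> - 1 / sqrt 5 \<le> a \<and> a \<le> 0))
       \<and> (- 1 / sqrt 5 \<le> a \<and> a \<le> 0 \<longrightarrow>
            is_proj Aplus (psi a) (\<lambda>t. (1 - a) / 2 + 3 / 4 * (1 - a\<^sup>2) * t) \<and>
            (\<forall>p. is_proj Aplus (psi a) p \<longrightarrow>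
               (AE t in lborel. t \<in> {-1..1} \<longrightarrow> p t = (1 - a) / 2 + 3 / 4 * (1 - a\<^sup>2) * t)))"
proof (intro conjI allI impI)
  fix c p
  assume h: "(\<forall>n. 0 \<le> c n) \<and> series_converges_to c p \<and> is_proj Aplus (psi a) p"
  then have c0: "\<And>n. 0 \<le> c n" and cp: "series_converges_to c p" and pp: "is_proj Aplus (psi a) p"
    by auto
  show "{n. c n > 0} = {0, 1} \<longleftrightarrow> - 1 / sqrt 5 \<le> a \<and> a \<le> 0"
  proof
    assume "{n. c n > 0} = {0, 1}"
    then show "- 1 / sqrt 5 \<le> a \<and> a \<le> 0" by (rule only_if[OF assms c0 cp pp])
  next
    assume "- 1 / sqrt 5 \<le> a \<and> a \<le> 0"
    then show "{n. c n > 0} = {0, 1}" using coeffs_p0[OF _ _ c0 cp pp] by auto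
  qed
next
  assume r: "- 1 / sqrt 5 \<le> a \<and> a \<le> 0"
  then show "is_proj Aplus (psi a) (\<lambda>t. (1 - a) / 2 + 3 / 4 * (1 - a\<^sup>2) * t)"
    using proj_p0 by auto
  fix p assume "is_proj Aplus (psi a) p"
  then have "AE t in MM. p t = (1 - a) / 2 + 3 / 4 * (1 - a\<^sup>2) * t"
    using proj_unique r by auto
  then show "AE t in lborel. t \<in> {-1..1} \<longrightarrow> p t = (1 - a) / 2 + 3 / 4 * (1 - a\<^sup>2) * t"
    by (simp add: AE_MM)
qed

end
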